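(* Fix $\alpha>0$. For $0<t\le1$ and $\mu\ge1$ define $$k_t(\mu)=\frac{(1+t\mu)^{2\alpha}\ln\left(1+\frac{t}{\mu}\right)+(\mu+t)^{2\alpha}\ln(1+t\mu)}{(1+t\mu)^{2\alpha}+(\mu+t)^{2\alpha}}.$$ Then for every $t\in(0,1]$, $\inf_{\mu\ge1}k_t(\mu)=\ln(1+t)$. *)

theory Defs
  imports Complex_Main
begin

definition kfun :: "real \<Rightarrow> real \<Rightarrow> real \<Rightarrow> real" where
  "kfun \<alpha> t \<mu> =
     ((1 + t * \<mu>) powr (2 * \<alpha>) * ln (1 + t / \<mu>) + (\<mu> + t) powr (2 * \<alpha>) * ln (1 + t * \<mu>))
     / ((1 + t * \<mu>) powr (2 * \<alpha>) + (\<mu> + t) powr (2 * \<alpha>))"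

end

theory Submission
  imports Defs
begin

lemma kfun_ge:
  fixes \<alpha> t \<mu> :: real
  assumes "\<alpha> > 0" and "0 < t" and "t \<le> 1" and "\<mu> \<ge> 1"
  shows "ln (1 + t) \<le> kfun \<alpha> t \<mu>"
proof -
  define A where "A = (1 + t * \<mu>) powr (2 * \<alpha>)"
  define B where "B = (\<mu> + t) powr (2 * \<alpha>)"
  define a where "a = ln (1 + t / \<mu>)"
  define b where "b = ln (1 + t * \<mu>)"
  define L where "L = ln (1 + t)"
  have mpos: "\<mu> > 0" using assms by auto
  have tm: "t * \<mu> > 0" using assms mpos by simp
  have Ap: "A > 0" unfolding A_def using tm by simp
  have Bp: "B > 0" unfolding B_def using assms mpos by simp
  have le1: "1 + t * \<mu> \<le> \<mu> + t"
  proof -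
    have "(\<mu> + t) - (1 + t*\<mu>) = (\<mu> - 1) * (1 - t)" by (simp add: algebra_simps)
    also have "\<dots> \<ge> 0" using assms by simp
    finally show ?thesis by simp
  qed
  have AB: "A \<le> B" unfolding A_def B_def
    using powr_mono2[of "2*\<alpha>" "1 + t*\<mu>" "\<mu> + t"] assms tm le1 by simp
  have tdm: "t / \<mu> \<le> t * \<mu>"
  proof -
    have "t / \<mu> \<le> t" using assms mpos by (simp add: divide_le_eq)
    also have "\<dots> \<le> t * \<mu>" using assms by simp
    finally show ?thesis .
  qed
  have tdp: "t / \<mu> > 0" using assms mpos by simp
  have ab: "a \<le> b" unfolding a_def b_def using tdm tdp by simp
  have prod: "(1 + t)^2 \<le> (1 + t/\<mu>) * (1 + t*\<mu>)"
  proof -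
    have m2: "\<mu> + 1/\<mu> \<ge> 2"
    proof -
      have "0 \<le> (\<mu> - 1) * (\<mu> - 1)" by simp
      hence "\<mu>*\<mu> + 1 \<ge> 2*\<mu>" by (simp add: algebra_simps)
      thus ?thesis using mpos by (simp add: field_simps)
    qed
    have "(1 + t/\<mu>) * (1 + t*\<mu>) = 1 + t^2 + t * (\<mu> + 1/\<mu>)"
      using mpos by (simp add: field_simps power2_eq_square)
    moreover have "t * (\<mu> + 1/\<mu>) \<ge> t * 2" using m2 assms by simp
    ultimately show ?thesis by (simp add: power2_eq_square algebra_simps)
  qed
  have sum: "2 * L \<le> a + b"
  proof -
    have "2 * L = ln ((1+t)^2)" unfolding L_def using assms by (simp add: ln_realpow)
    also have "\<dots> \<le> ln ((1 + t/\<mu>) * (1 + t*\<mu>))" proof (rule iffD2[OF ln_le_cancel_iff])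
      show "0 < (1 + t)^2" using assms by simp
      show "0 < (1 + t/\<mu>) * (1 + t*\<mu>)" using tdp tm by simp
    qed (rule prod)
    also have "\<dots> = a + b" unfolding a_def b_def using tdp tm by (simp add: ln_mult)
    finally show ?thesis .
  qed
  have key: "(A + B) * L \<le> A * a + B * b"
  proof -
    have "A * a + B * b = (A + B) * (a + b) / 2 + (B - A) * (b - a) / 2"
      by (simp add: field_simps)
    moreover have "(B - A) * (b - a) \<ge> 0" using AB ab by simp
    moreover have "(A + B) * (a + b) \<ge> (A + B) * (2 * L)"
      using sum Ap Bp by (intro mult_left_mono) auto
    ultimately show ?thesis by simp
  qed
  have "kfun \<alpha> t \<mu> = (A * a + B * b) / (A + B)"
    unfolding kfun_def A_def B_def a_def b_def by simp
  moreover have "L \<le> (A * a + B * b) / (A + B)"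
    using key Ap Bp by (simp add: le_divide_eq mult.commute)
  ultimately show ?thesis unfolding L_def by simp
qed

theorem lemma2p4:
  fixes \<alpha> t :: real
  assumes "\<alpha> > 0" and "0 < t" and "t \<le> 1"
  shows "(INF \<mu>\<in>{1..}. kfun \<alpha> t \<mu>) = ln (1 + t)"
proof -
  have k1: "kfun \<alpha> t 1 = ln (1 + t)"
  proof -
    have "(1 + t) powr (2 * \<alpha>) > 0" using assms by simp
    hence "(1 + t) powr (2 * \<alpha>) + (1 + t) powr (2 * \<alpha>) \<noteq> 0" by simp
    moreover have "(1 + t) powr (2 * \<alpha>) * ln (1 + t) + (1 + t) powr (2 * \<alpha>) * ln (1 + t)
       = ((1 + t) powr (2 * \<alpha>) + (1 + t) powr (2 * \<alpha>)) * ln (1 + t)" by (simp add: algebra_simps)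
    ultimately show ?thesis unfolding kfun_def by (simp add: add.commute)
  qed
  show ?thesis
    apply (rule cInf_eq_minimum)
    using k1 apply force
    using kfun_ge[OF assms] by auto
qed

end
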